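(* Let $\gamma\in(1,3)$, $\mu\in(0,1)$, $K>0$, and $U_C=\frac{2\mu}{\gamma+1}$. Define $U^{\mathrm{sp}}=U^{\mathrm{sp}}(y)$ for $0<y<\infty$ by the implicit formula \[ y=K\frac{\big(\frac{2\mu}{\gamma+1}-U^{\mathrm{sp}}\big)^{\frac1\mu-1}}{(-U^{\mathrm{sp}})^{\frac1\mu}},\qquad 0<y<\infty,\ U^{\mathrm{sp}}<0. \] Then $U^{\mathrm{sp}}$ solves \[ y\frac{dU}{dy}=-\frac{[(\gamma+1)U-2\mu]U}{(\gamma+1)U-2}, \] satisfies $-\infty<U^{\mathrm{sp}}<0$ and $\lim_{y\to\infty}U^{\mathrm{sp}}(y)=0$. Moreover, \[ U^{\mathrm{sp}}(y)=-K^\mu U_C^{1-\mu}\frac{1}{y^\mu}+o\Big(\frac1{y^\mu}\Big)\ \text{ as }y\to\infty,\qquad U^{\mathrm{sp}}(y)=-\frac{K}{y}+o\Big(\frac1y\Big)\ \text{ as }y\to0^+. \] *)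

theory Defs
  imports "HOL-Analysis.Analysis" "HOL-Library.Landau_Symbols"
begin

definition U_C :: "real \<Rightarrow> real \<Rightarrow> real" where
  "U_C gamma mu = 2 * mu / (gamma + 1)"

definition Usp_implicit :: "real \<Rightarrow> real \<Rightarrow> real \<Rightarrow> real \<Rightarrow> real" where
  "Usp_implicit gamma mu K U =
     K * (U_C gamma mu - U) powr (1 / mu - 1) / (- U) powr (1 / mu)"

definition Usp :: "real \<Rightarrow> real \<Rightarrow> real \<Rightarrow> real \<Rightarrow> real" where
  "Usp gamma mu K y = (THE U. U < 0 \<and> y = Usp_implicit gamma mu K U)"

end

theory Submission imports Defs "HOL-Real_Asymp.Real_Asymp" begin
lemma fder:
  fixes c K a b U :: real assumes "c>0" "U < 0"
  shows "((\<lambda>U. K * (c - U) powr a / (-U) powr b) has_real_derivative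
     (K * (c - U) powr a / (-U) powr b) * (b/(-U) - a/(c-U))) (at U)"
proof -
  have p1: "(c-U) powr (a-1) = (c-U) powr a / (c-U)" using assms by (simp add: powr_diff)
  have p2: "(-U) powr (b-1) = (-U) powr b / (-U)" using assms by (simp add: powr_diff)
  have "((\<lambda>U. K * (c - U) powr a / (-U) powr b) has_real_derivative
     ((0 * (c - U) powr a + a * (c - U) powr (a - 1) * (0 - 1) * K) * (- U) powr b -
     K * (c - U) powr a * (b * (- U) powr (b - 1) * - 1)) /
    ((- U) powr b * (- U) powr b)) (at U)"
    using assms by (auto intro!: derivative_eq_intros)
  moreover have "((0 * (c - U) powr a + a * (c - U) powr (a - 1) * (0 - 1) * K) * (- U) powr b -
     K * (c - U) powr a * (b * (- U) powr (b - 1) * - 1)) /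
    ((- U) powr b * (- U) powr b) = (K * (c - U) powr a / (-U) powr b) * (b/(-U) - a/(c-U))"
    unfolding p1 p2 using assms by (simp add: field_simps)
  ultimately show ?thesis by simp
qed

lemma aux_frac:
  fixes a u X Y p :: real
  assumes "a \<noteq> 0" "p \<noteq> 0" "Y \<noteq> 0"
  shows "a*u*(X/p)/(a*Y/p) = u*X/Y"
  using assms by (simp add: field_simps)

theorem lemma3p6:
  fixes gamma mu K :: real
  assumes "1 < gamma" "gamma < 3" "0 < mu" "mu < 1" "0 < K"
  shows "(\<forall>y>0. \<exists>!U. U < 0 \<and> y = Usp_implicit gamma mu K U)
    \<and> (\<forall>y>0. \<exists>D. (Usp gamma mu K has_real_derivative D) (at y) \<and>
          y * D = - (((gamma + 1) * Usp gamma mu K y - 2 * mu) * Usp gamma mu K y)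
                    / ((gamma + 1) * Usp gamma mu K y - 2))
    \<and> (\<forall>y>0. Usp gamma mu K y < 0)
    \<and> (Usp gamma mu K \<longlongrightarrow> 0) at_top
    \<and> (\<lambda>y. Usp gamma mu K y - (- ((K powr mu) * ((U_C gamma mu) powr (1 - mu)) / (y powr mu))))
         \<in> o[at_top](\<lambda>y. 1 / y powr mu)
    \<and> (\<lambda>y. Usp gamma mu K y - (- K / y)) \<in> o[at_right 0](\<lambda>y. 1 / y)"
proof -
  define c where "c = U_C gamma mu"
  define f where "f = Usp_implicit gamma mu K"
  define g where "g = Usp gamma mu K"
  define m where "m = mu"
  have c0: "c > 0" using assms by (simp add: c_def U_C_def)
  have m0: "0 < m" "m < 1" using assms by (auto simp: m_def)
  have fdef: "f = (\<lambda>U. K * (c - U) powr (1/m - 1) / (-U) powr (1/m))"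
    by (auto simp: f_def c_def m_def Usp_implicit_def)
  define f' where "f' = (\<lambda>U. f U * ((1/m)/(-U) - (1/m-1)/(c-U)))"
  have fpos: "f U > 0" if "U < 0" for U
    using that c0 assms(5) by (simp add: fdef)
  have fder: "(f has_real_derivative f' U) (at U)" if "U < 0" for U
    unfolding f'_def fdef by (rule fder[OF c0 that])
  have f'pos: "f' U > 0" if "U < 0" for U
  proof -
    have "(1/m-1)/(c-U) < (1/m)/(c-U)" using that c0 m0 by (intro divide_strict_right_mono) auto
    also have "\<dots> \<le> (1/m)/(-U)" using that c0 m0 by (intro divide_left_mono) (auto simp: mult_pos_neg)
    finally show ?thesis unfolding f'_def using fpos[OF that] by simp
  qed
  have fcont: "isCont f U" if "U < 0" for U using fder[OF that] by (rule DERIV_isCont)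
  have fmono: "f U1 < f U2" if "U1 < U2" "U2 < 0" for U1 U2
  proof (rule DERIV_pos_imp_increasing[OF that(1)])
    fix x assume "U1 \<le> x" "x \<le> U2"
    then have "x < 0" using that by simp
    then show "\<exists>y. DERIV f x :> y \<and> y > 0" using fder f'pos by blast
  qed
  have finj: "U1 = U2" if "U1 < 0" "U2 < 0" "f U1 = f U2" for U1 U2
    using fmono[of U1 U2] fmono[of U2 U1] that by (cases U1 U2 rule: linorder_cases) auto
  have lim_bot: "(f \<longlongrightarrow> 0) at_bot"
    unfolding fdef using c0 assms(5) m0 by real_asymp
  have lim_top: "filterlim f at_top (at_left 0)"
    unfolding fdef using c0 assms(5) m0 by real_asymp
  have ex: "\<exists>U<0. f U = y" if "y > 0" for y
  proof -
    have "eventually (\<lambda>U. f U < y) at_bot" using lim_bot that by (simp add: order_tendstoD)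
    then obtain N where N: "\<And>U. U \<le> N \<Longrightarrow> f U < y" by (auto simp: eventually_at_bot_linorder)
    define U1 where "U1 = min N (-1)"
    have U1: "U1 < 0" "f U1 < y" using N by (auto simp: U1_def)
    have "eventually (\<lambda>U. f U > y) (at_left 0)" using lim_top by (simp add: filterlim_at_top_dense)
    moreover have "eventually (\<lambda>U. U \<in> {U1<..<0}) (at_left (0::real))"
      using U1 by (intro eventually_at_left_real)
    ultimately have ev2: "eventually (\<lambda>U. f U > y \<and> U \<in> {U1<..<0}) (at_left (0::real))"
      by (rule eventually_conj)
    then obtain U2 where U2: "f U2 > y" "U1 < U2" "U2 < 0"
      using eventually_happens[OF ev2] by (auto simp: trivial_limit_at_left_real)
    have "\<exists>x\<ge>U1. x \<le> U2 \<and> f x = y"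
      by (rule IVT) (use U1 U2 fcont in auto)
    then obtain x where "x \<le> U2" "f x = y" by blast
    then show ?thesis using U2 by (intro exI[of _ x]) auto
  qed
  have uniq: "\<exists>!U. U < 0 \<and> y = f U" if "y > 0" for y
    using ex[OF that] finj by metis
  have gprop: "g y < 0 \<and> f (g y) = y" if "y > 0" for y
  proof -
    have "g y < 0 \<and> y = f (g y)" unfolding g_def Usp_def f_def[symmetric]
      by (rule theI'[OF uniq[OF that]])
    then show ?thesis by simp
  qed
  have gf: "g (f U) = U" if "U < 0" for U
    using gprop[OF fpos[OF that]] finj that by blast
  have P2: "\<exists>D. (g has_real_derivative D) (at y) \<and>
          y * D = - (((gamma + 1) * g y - 2 * m) * g y) / ((gamma + 1) * g y - 2)" if y0: "y > 0" for y
  proof -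
    define U0 where "U0 = g y"
    have U0: "U0 < 0" "f U0 = y" using gprop[OF y0] by (auto simp: U0_def)
    have "isCont g (f U0)"
    proof (rule isCont_inverse_function[where d = "-U0/2" and f = f and g = g and x = U0])
      show "0 < -U0/2" using U0 by simp
    next
      fix z assume "\<bar>z - U0\<bar> \<le> -U0/2"
      then have "z < 0" using U0 by (auto simp: abs_if split: if_splits)
      then show "g (f z) = z" using gf by auto
    next
      fix z assume "\<bar>z - U0\<bar> \<le> -U0/2"
      then have "z < 0" using U0 by (auto simp: abs_if split: if_splits)
      then show "isCont f z" using fcont by auto
    qed
    then have cont: "isCont g y" using U0 by simp
    have "DERIV g y :> inverse (f' U0)"
    proof (rule DERIV_inverse_function[where a = 0 and b = "y+1"])
      show "DERIV f (g y) :> f' U0" using fder U0 by (simp add: U0_def)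
      show "f' U0 \<noteq> 0" using f'pos[OF U0(1)] by simp
      show "0 < y" "y < y + 1" using y0 by auto
      show "\<And>z. 0 < z \<Longrightarrow> z < y + 1 \<Longrightarrow> f (g z) = z" using gprop by blast
      show "isCont g y" by (rule cont)
    qed
    moreover have "y * inverse (f' U0) = - (((gamma + 1) * U0 - 2 * m) * U0) / ((gamma + 1) * U0 - 2)"
    proof -
      have fp: "f U0 > 0" by (rule fpos[OF U0(1)])
      have e1: "(1/m)/(-U0) - (1/m-1)/(c-U0) = (c - m*U0)/(m*(-U0)*(c-U0))"
        using U0 c0 m0 by (simp add: field_simps)
      define Q where "Q = (1/m)/(-U0) - (1/m-1)/(c-U0)"
      have fq: "f' U0 = y * Q" unfolding f'_def Q_def U0(2) ..
      have "Q > 0" using f'pos[OF U0(1)] fq y0 by (simp add: zero_less_mult_iff)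
      have "y * inverse (f' U0) = 1 / ((1/m)/(-U0) - (1/m-1)/(c-U0))"
        unfolding fq Q_def[symmetric] using y0 \<open>Q > 0\<close> by (simp add: field_simps)
      also have "\<dots> = m*(-U0)*(c-U0)/(c - m*U0)" unfolding e1 by simp
      also have "\<dots> = - (((gamma + 1) * U0 - 2 * m) * U0) / ((gamma + 1) * U0 - 2)"
      proof -
        have n0: "(gamma + 1) * U0 < 0" using assms U0 by (intro mult_pos_neg) auto
        have n1: "(gamma + 1) * U0 - 2 < 0" using n0 by simp
        have n3: "2 - (gamma + 1) * U0 > 0" using n1 by simp
        have gp: "gamma + 1 > 0" using assms by simp
        have "c - U0 = (2 * mu - (gamma + 1) * U0) / (gamma + 1)"
          unfolding c_def U_C_def using gp by (simp add: field_simps)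
        moreover have "c - m * U0 = mu * (2 - (gamma + 1) * U0) / (gamma + 1)"
          unfolding c_def U_C_def m_def using gp by (simp add: field_simps)
        ultimately have "m*(-U0)*(c-U0)/(c - m*U0) =
            mu*(-U0)*((2 * mu - (gamma + 1) * U0) / (gamma + 1)) / (mu * (2 - (gamma + 1) * U0) / (gamma + 1))"
          by (simp add: m_def)
        also have "\<dots> = (-U0)*(2 * mu - (gamma + 1) * U0) / (2 - (gamma + 1) * U0)"
          by (rule aux_frac) (use gp n3 assms in auto)
        also have "\<dots> = - (((gamma + 1) * U0 - 2 * m) * U0) / ((gamma + 1) * U0 - 2)"
          using n1 n3 unfolding m_def by (simp add: field_simps)
        finally show ?thesis .
      qed
      finally show ?thesis .
    qed
    ultimately show ?thesis unfolding U0_def by blast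
  qed
  have P4: "(g \<longlongrightarrow> 0) at_top"
  proof (rule order_tendstoI)
    fix a :: real assume "a < 0"
    have "eventually (\<lambda>y. y > f a) at_top" by (rule eventually_gt_at_top)
    then show "eventually (\<lambda>y. g y > a) at_top"
    proof (rule eventually_mono)
      fix y assume y: "y > f a"
      then have y0: "y > 0" using fpos[OF \<open>a < 0\<close>] by simp
      show "g y > a"
      proof (rule ccontr)
        assume "\<not> g y > a"
        then have "g y < a \<or> g y = a" by auto
        then have "f (g y) \<le> f a" using fmono[of "g y" a] \<open>a < 0\<close> by auto
        then show False using gprop[OF y0] y by simp
      qed
    qed
  next
    fix a :: real assume "a > 0"
    have "eventually (\<lambda>y. y > (0::real)) at_top" by (rule eventually_gt_at_top)
    then show "eventually (\<lambda>y. g y < a) at_top"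
      by (rule eventually_mono) (use gprop \<open>a > 0\<close> in force)
  qed
  have gleft: "filterlim g (at_left 0) at_top"
    by (rule tendsto_imp_filterlim_at_left[OF P4])
       (use eventually_gt_at_top[of "0::real"] in \<open>rule eventually_mono\<close>, use gprop in blast)
  define A where "A = K powr m * c powr (1 - m)"
  have hlim0: "((\<lambda>U. f U powr m * (-U)) \<longlongrightarrow> (K * c powr (1/m-1)) powr m) (at_left 0)"
    unfolding fdef using c0 assms(5) m0 by real_asymp
  have "(K * c powr (1/m-1)) powr m = A"
  proof -
    have "(1/m-1)*m = 1 - m" using m0 by (simp add: field_simps)
    then show ?thesis unfolding A_def using c0 assms(5)
      by (simp add: powr_mult powr_powr)
  qed
  with hlim0 have hlim: "((\<lambda>U. f U powr m * (-U)) \<longlongrightarrow> A) (at_left 0)" by simp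
  have hg: "((\<lambda>y. f (g y) powr m * (- g y)) \<longlongrightarrow> A) at_top"
    using filterlim_compose[OF hlim gleft] by simp
  have P5: "(\<lambda>y. g y - (- (K powr m * c powr (1 - m) / y powr m))) \<in> o[at_top](\<lambda>y. 1 / y powr m)"
  proof (rule smalloI_tendsto)
    have "((\<lambda>y. A - f (g y) powr m * (- g y)) \<longlongrightarrow> A - A) at_top"
      by (intro tendsto_diff tendsto_const hg)
    then have l: "((\<lambda>y. A - f (g y) powr m * (- g y)) \<longlongrightarrow> 0) at_top" by simp
    have "eventually (\<lambda>y. A - f (g y) powr m * (- g y) =
        (g y - (- (K powr m * c powr (1 - m) / y powr m))) / (1 / y powr m)) at_top"
      using eventually_gt_at_top[of "0::real"]
    proof (rule eventually_mono)
      fix y :: real assume y: "y > 0"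
      then have "f (g y) = y" using gprop by blast
      then show "A - f (g y) powr m * (- g y) =
        (g y - (- (K powr m * c powr (1 - m) / y powr m))) / (1 / y powr m)"
        using y unfolding A_def by (simp add: field_simps)
    qed
    with l show "((\<lambda>y. (g y - (- (K powr m * c powr (1 - m) / y powr m))) / (1 / y powr m)) \<longlongrightarrow> 0) at_top"
      using tendsto_cong by fastforce
    show "eventually (\<lambda>y. 1 / y powr m \<noteq> 0) at_top"
      using eventually_gt_at_top[of "0::real"] by (rule eventually_mono) simp
  qed
  have gbot: "filterlim g at_bot (at_right 0)"
    unfolding filterlim_at_bot
  proof
    fix Z :: real
    define Z' where "Z' = min Z (-1)"
    have Z': "Z' < 0" "Z' \<le> Z" by (auto simp: Z'_def)
    have "eventually (\<lambda>y. y \<in> {0<..<f Z'}) (at_right (0::real))"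
      using fpos[OF Z'(1)] by (intro eventually_at_right_real)
    then show "eventually (\<lambda>y. g y \<le> Z) (at_right 0)"
    proof (rule eventually_mono)
      fix y assume y: "y \<in> {0<..<f Z'}"
      show "g y \<le> Z"
      proof (rule ccontr)
        assume "\<not> g y \<le> Z"
        then have "Z' < g y" using Z' by simp
        moreover have gy: "g y < 0" "f (g y) = y" using gprop y by auto
        ultimately have "f Z' < f (g y)" using fmono by blast
        then show False using gprop y by auto
      qed
    qed
  qed
  have h2lim: "((\<lambda>U. f U * (-U)) \<longlongrightarrow> K) at_bot"
    unfolding fdef using c0 assms(5) m0 by real_asymp
  have h2g: "((\<lambda>y. f (g y) * (- g y)) \<longlongrightarrow> K) (at_right 0)"
    using filterlim_compose[OF h2lim gbot] by simp
  have P6: "(\<lambda>y. g y - (- K / y)) \<in> o[at_right 0](\<lambda>y. 1 / y)"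
  proof (rule smalloI_tendsto)
    have "((\<lambda>y. K - f (g y) * (- g y)) \<longlongrightarrow> K - K) (at_right 0)"
      by (intro tendsto_diff tendsto_const h2g)
    then have l: "((\<lambda>y. K - f (g y) * (- g y)) \<longlongrightarrow> 0) (at_right 0)" by simp
    have "eventually (\<lambda>y. K - f (g y) * (- g y) = (g y - (- K / y)) / (1 / y)) (at_right 0)"
      using eventually_at_right_real[of "0::real" 1, OF zero_less_one]
    proof (rule eventually_mono)
      fix y :: real assume y: "y \<in> {0<..<1}"
      then have "f (g y) = y" using gprop by auto
      then show "K - f (g y) * (- g y) = (g y - (- K / y)) / (1 / y)"
        using y by (simp add: field_simps)
    qed
    with l show "((\<lambda>y. (g y - (- K / y)) / (1 / y)) \<longlongrightarrow> 0) (at_right 0)"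
      using tendsto_cong by fastforce
    show "eventually (\<lambda>y. 1 / y \<noteq> 0) (at_right (0::real))"
      using eventually_at_right_real[of "0::real" 1, OF zero_less_one] by (rule eventually_mono) simp
  qed
  have P1: "\<forall>y>0. \<exists>!U. U < 0 \<and> y = f U" using uniq by blast
  show ?thesis
    unfolding f_def[symmetric] g_def[symmetric] c_def[symmetric]
    unfolding m_def[symmetric]
    using P1 P2 P4 P5 P6 gprop by blast
qed
end
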